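(* Let $p$ be an odd prime, $m\ge1$ and $n\ge 2$ integers such that $p$ divides $|\mathrm{GL}_m(\mathbb{Z}/2\mathbb{Z})|$. Let $P\in\mathrm{GL}_m(\mathbb{Z}/2\mathbb{Z})$ have order $p$, and let $E\in\mathrm{GL}_n(\mathbb{Z}/p\mathbb{Z})$ be a non-identity diagonal matrix with diagonal entries $(1,\epsilon_2,\dots,\epsilon_n)$, $\epsilon_i\in\{-1,1\}$. On $A = (\mathbb{Z}/2\mathbb{Z})^m\times(\mathbb{Z}/p\mathbb{Z})^n$ (column vectors) define \[ (u,v)\cdot(x,y) = (u + P^{v_1}x,\ v+y),\qquad (u,v)\circ(x,y) = (u+x,\ v + E^{u_1}y), \] where $u=(u_1,\dots,u_m)^T$, $v=(v_1,\dots,v_n)^T$. Then $(A,\cdot,\circ)$ is a skew brace, and if there exists $w\in\mathbb{Z}/p\mathbb{Z}$ such that $P^{w}-I_m$ has a non-zero entry in its first row, then $A$ is not meta-trivial.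
   Context: A skew brace is a set $A$ with two group operations $\cdot$ and $\circ$ such that $a\circ(b\cdot c) = (a\circ b)\cdot a^{-1}\cdot(a\circ c)$ for all $a,b,c$, where $a^{-1}$ is the inverse in $(A,\cdot)$. Define $a*b = a^{-1}\cdot(a\circ b)\cdot b^{-1}$ and let $A'$ be the subgroup of $(A,\cdot)$ generated by all $a*b$. $A$ is meta-trivial if $x\circ y = x\cdot y$ for all $x,y\in A'$. *)

theory Defs
  imports "Jordan_Normal_Form.Matrix" "Berlekamp_Zassenhaus.Finite_Field"
    "HOL-Algebra.Generated_Groups"
begin

definition mk_grp :: "'a set \<Rightarrow> ('a \<Rightarrow> 'a \<Rightarrow> 'a) \<Rightarrow> 'a monoid" where
  "mk_grp A f = \<lparr>carrier = A, mult = f,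
      one = (THE e. e \<in> A \<and> (\<forall>a\<in>A. f e a = a \<and> f a e = a))\<rparr>"

definition skew_brace :: "'a set \<Rightarrow> ('a \<Rightarrow> 'a \<Rightarrow> 'a) \<Rightarrow> ('a \<Rightarrow> 'a \<Rightarrow> 'a) \<Rightarrow> bool" where
  "skew_brace A dot circ \<longleftrightarrow>
     group (mk_grp A dot) \<and> group (mk_grp A circ) \<and>
     (\<forall>a\<in>A. \<forall>b\<in>A. \<forall>c\<in>A.
        circ a (dot b c) = dot (dot (circ a b) (inv\<^bsub>mk_grp A dot\<^esub> a)) (circ a c))"

definition brace_star :: "'a set \<Rightarrow> ('a \<Rightarrow> 'a \<Rightarrow> 'a) \<Rightarrow> ('a \<Rightarrow> 'a \<Rightarrow> 'a) \<Rightarrow> 'a \<Rightarrow> 'a \<Rightarrow> 'a" where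
  "brace_star A dot circ a b =
     dot (dot (inv\<^bsub>mk_grp A dot\<^esub> a) (circ a b)) (inv\<^bsub>mk_grp A dot\<^esub> b)"

definition brace_commutator :: "'a set \<Rightarrow> ('a \<Rightarrow> 'a \<Rightarrow> 'a) \<Rightarrow> ('a \<Rightarrow> 'a \<Rightarrow> 'a) \<Rightarrow> 'a set" where
  "brace_commutator A dot circ =
     generate (mk_grp A dot) {brace_star A dot circ a b | a b. a \<in> A \<and> b \<in> A}"

definition meta_trivial :: "'a set \<Rightarrow> ('a \<Rightarrow> 'a \<Rightarrow> 'a) \<Rightarrow> ('a \<Rightarrow> 'a \<Rightarrow> 'a) \<Rightarrow> bool" where
  "meta_trivial A dot circ \<longleftrightarrow>
     (\<forall>x\<in>brace_commutator A dot circ. \<forall>y\<in>brace_commutator A dot circ. circ x y = dot x y)"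

end

theory Submission imports Defs begin


lemma pow_mat_add: assumes "A \<in> carrier_mat k k"
  shows "A ^\<^sub>m (i + j) = A ^\<^sub>m i * A ^\<^sub>m j"
proof (induction j)
  case 0 then show ?case using assms by simp
next
  case (Suc j)
  have "A ^\<^sub>m (i + Suc j) = (A ^\<^sub>m i * A ^\<^sub>m j) * A" using Suc by simp
  also have "\<dots> = A ^\<^sub>m i * (A ^\<^sub>m j * A)"
    by (rule assoc_mult_mat[of _ k k _ k _ k]) (use assms in auto)
  finally show ?case by simp
qed

lemma pow_mat_mod: assumes A: "A \<in> carrier_mat k k" and c: "A ^\<^sub>m c = 1\<^sub>m k"
  shows "A ^\<^sub>m s = A ^\<^sub>m (s mod c)"
proof -
  have q: "A ^\<^sub>m (c * q) = 1\<^sub>m k" for q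
  proof (induction q)
    case 0 then show ?case using A by simp
  next
    case (Suc q)
    have "A ^\<^sub>m (c * Suc q) = A ^\<^sub>m (c * q) * A ^\<^sub>m c"
      using pow_mat_add[OF A, of "c*q" c] by (simp add: add.commute)
    then show ?case using Suc c by simp
  qed
  have "A ^\<^sub>m s = A ^\<^sub>m (c * (s div c) + s mod c)" by simp
  also have "\<dots> = A ^\<^sub>m (c * (s div c)) * A ^\<^sub>m (s mod c)" by (rule pow_mat_add[OF A])
  also have "\<dots> = A ^\<^sub>m (s mod c)" using q A by simp
  finally show ?thesis .
qed

lemma pow_to_int_add:
  fixes a b :: "'b::finite mod_ring"
  assumes A: "A \<in> carrier_mat k k" and c: "A ^\<^sub>m CARD('b) = 1\<^sub>m k"
  shows "A ^\<^sub>m nat (to_int_mod_ring (a + b)) = A ^\<^sub>m nat (to_int_mod_ring a) * A ^\<^sub>m nat (to_int_mod_ring b)"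
proof -
  have ta: "to_int_mod_ring a \<ge> 0" "to_int_mod_ring b \<ge> 0"
    using range_to_int_mod_ring[where 'a='b] by auto
  have "nat (to_int_mod_ring (a + b)) = (nat (to_int_mod_ring a) + nat (to_int_mod_ring b)) mod CARD('b)"
    unfolding to_int_mod_ring_add using ta by (simp add: nat_mod_distrib nat_add_distrib)
  then show ?thesis using pow_mat_mod[OF A c] pow_mat_add[OF A] by metis
qed

lemma pow_to_int_zero:
  fixes A :: "'a::semiring_1 mat"
  assumes A: "A \<in> carrier_mat k k"
  shows "A ^\<^sub>m nat (to_int_mod_ring (0::'b::finite mod_ring)) = 1\<^sub>m k"
  using A by simp

lemma mk_grp_eq: assumes "e \<in> A" "\<And>a. a \<in> A \<Longrightarrow> f e a = a \<and> f a e = a"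
  shows "mk_grp A f = \<lparr>carrier = A, mult = f, one = e\<rparr>"
proof -
  have "(THE e. e \<in> A \<and> (\<forall>a\<in>A. f e a = a \<and> f a e = a)) = e"
  proof (rule the_equality)
    fix e' assume "e' \<in> A \<and> (\<forall>a\<in>A. f e' a = a \<and> f a e' = a)"
    then show "e' = e" using assms by metis
  qed (use assms in auto)
  then show ?thesis unfolding mk_grp_def by simp
qed

lemma vec_id1: assumes "u \<in> carrier_vec k" "x \<in> carrier_vec k" "X \<in> carrier_vec k" "Z \<in> carrier_vec k"
  shows "u + x + - X + (X + Z) = u + (x + (Z :: 'a::ab_group_add vec))"
  using assms by (intro eq_vecI) auto

lemma vec_id2: assumes "v \<in> carrier_vec k" "Y \<in> carrier_vec k" "W \<in> carrier_vec k"
  shows "v + Y + - v + (v + W) = v + (Y + (W :: 'a::ab_group_add vec))"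
  using assms by (intro eq_vecI) auto

theorem proposition9p4:
  fixes P :: "bool mod_ring mat"
    and E :: "'p::prime_card mod_ring mat"
    and m n :: nat
  assumes p_odd: "odd CARD('p)"
    and m: "m \<ge> 1" and n: "n \<ge> 2"
    and p_dvd: "CARD('p) dvd card {M \<in> carrier_mat m m. invertible_mat (M :: bool mod_ring mat)}"
    and P_GL: "P \<in> carrier_mat m m" "invertible_mat P"
    and P_ord: "P ^\<^sub>m CARD('p) = 1\<^sub>m m" "\<forall>k. 0 < k \<and> k < CARD('p) \<longrightarrow> P ^\<^sub>m k \<noteq> 1\<^sub>m m"
    and E_GL: "E \<in> carrier_mat n n" "invertible_mat E"
    and E_diag: "\<forall>i<n. \<forall>j<n. i \<noteq> j \<longrightarrow> E $$ (i, j) = 0"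
    and E_11: "E $$ (0, 0) = 1"
    and E_eps: "\<forall>i<n. E $$ (i, i) = 1 \<or> E $$ (i, i) = -1"
    and E_nonid: "E \<noteq> 1\<^sub>m n"
  defines "A \<equiv> carrier_vec m \<times> carrier_vec n"
    and "dot \<equiv> \<lambda>(u, v) (x, y). (u + P ^\<^sub>m nat (to_int_mod_ring (v $ 0)) *\<^sub>v x, v + y)"
    and "circ \<equiv> \<lambda>(u, v) (x, y). (u + x, v + E ^\<^sub>m nat (to_int_mod_ring (u $ 0)) *\<^sub>v y)"
  shows "skew_brace A dot circ \<and>
    ((\<exists>w :: 'p mod_ring. \<exists>j<m. (P ^\<^sub>m nat (to_int_mod_ring w) - 1\<^sub>m m) $$ (0, j) \<noteq> 0)
       \<longrightarrow> \<not> meta_trivial A dot circ)"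
proof -
  define Q where "Q = (\<lambda>a::'p mod_ring. P ^\<^sub>m nat (to_int_mod_ring a))"
  define R where "R = (\<lambda>b::bool mod_ring. E ^\<^sub>m nat (to_int_mod_ring b))"
  have Pc: "P \<in> carrier_mat m m" using P_GL by simp
  have Ec: "E \<in> carrier_mat n n" using E_GL by simp
  have n0: "0 < n" using n by simp
  have m0: "0 < m" using m by simp
  have EE: "E * E = 1\<^sub>m n"
  proof (rule eq_matI)
    fix i j assume "i < dim_row (1\<^sub>m n)" and "j < dim_col (1\<^sub>m n)"
    then have i: "i < n" "j < n" by auto
    have "(E * E) $$ (i,j) = (\<Sum>k\<in>{0..<n}. E $$ (i,k) * E $$ (k,j))"
      using Ec i by (simp add: scalar_prod_def)
    also have "\<dots> = (\<Sum>k\<in>{0..<n}. if k = i then E $$ (i,i) * E $$ (i,j) else 0)"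
      by (rule sum.cong) (use E_diag i in auto)
    also have "\<dots> = E $$ (i,i) * E $$ (i,j)" using i by simp
    also have "\<dots> = 1\<^sub>m n $$ (i,j)"
      using E_eps E_diag i by (cases "i = j") auto
    finally show "(E * E) $$ (i,j) = 1\<^sub>m n $$ (i,j)" .
  qed (use Ec in auto)
  have E2: "E ^\<^sub>m CARD(bool) = 1\<^sub>m n"
    using Ec EE by (simp add: numeral_2_eq_2)
  have P1: "P ^\<^sub>m CARD('p) = 1\<^sub>m m" using P_ord by simp
  have Qc[simp]: "Q a \<in> carrier_mat m m" for a unfolding Q_def using Pc by simp
  have Rc[simp]: "R b \<in> carrier_mat n n" for b unfolding R_def using Ec by simp
  have Qadd: "Q (a + b) = Q a * Q b" for a b unfolding Q_def by (rule pow_to_int_add[OF Pc P1])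
  have Radd: "R (a + b) = R a * R b" for a b unfolding R_def by (rule pow_to_int_add[OF Ec]) (use E2 in simp)
  have Q0: "Q 0 = 1\<^sub>m m" unfolding Q_def using Pc by simp
  have R0: "R 0 = 1\<^sub>m n" unfolding R_def using Ec by simp
  have rowE: "row E 0 = unit_vec n 0"
    by (rule eq_vecI) (use Ec E_diag E_11 n0 in auto)
  have Efirst: "(E ^\<^sub>m k *\<^sub>v y) $ 0 = y $ 0" if "y \<in> carrier_vec n" for k y
    using that
  proof (induction k arbitrary: y)
    case 0 then show ?case using Ec by simp
  next
    case (Suc k)
    have "(E ^\<^sub>m Suc k *\<^sub>v y) = E ^\<^sub>m k *\<^sub>v (E *\<^sub>v y)"
      using Ec Suc.prems by (simp add: assoc_mult_mat_vec[of _ n n _ n])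
    also have "\<dots> $ 0 = (E *\<^sub>v y) $ 0" by (rule Suc.IH) (use Ec Suc.prems in simp)
    also have "\<dots> = y $ 0" using Ec n0 Suc.prems rowE by simp
    finally show ?case .
  qed
  have Rfirst: "(R b *\<^sub>v y) $ 0 = y $ 0" if "y \<in> carrier_vec n" for b y
    unfolding R_def by (rule Efirst[OF that])
  have QQ: "Q a *\<^sub>v (Q b *\<^sub>v x) = Q (a + b) *\<^sub>v x" if "x \<in> carrier_vec m" for a b x
    using that by (simp add: Qadd assoc_mult_mat_vec[of _ m m _ m])
  have RR: "R a *\<^sub>v (R b *\<^sub>v x) = R (a + b) *\<^sub>v x" if "x \<in> carrier_vec n" for a b x
    using that by (simp add: Radd assoc_mult_mat_vec[of _ n n _ n])
  have Qdist: "Q a *\<^sub>v (x + y) = Q a *\<^sub>v x + Q a *\<^sub>v y" if "x \<in> carrier_vec m" "y \<in> carrier_vec m" for a x y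
    using that by (simp add: mult_add_distrib_mat_vec[OF Qc])
  have Rdist: "R a *\<^sub>v (x + y) = R a *\<^sub>v x + R a *\<^sub>v y" if "x \<in> carrier_vec n" "y \<in> carrier_vec n" for a x y
    using that by (simp add: mult_add_distrib_mat_vec[OF Rc])
  have Qneg: "Q a *\<^sub>v (- x) = - (Q a *\<^sub>v x)" if "x \<in> carrier_vec m" for a x
    using that carrier_matD[OF Qc[of a]] by (intro eq_vecI) (auto simp: carrier_vecD)
  have Rneg: "R a *\<^sub>v (- x) = - (R a *\<^sub>v x)" if "x \<in> carrier_vec n" for a x
    using that carrier_matD[OF Rc[of a]] by (intro eq_vecI) (auto simp: carrier_vecD)
  have Qz: "Q a *\<^sub>v 0\<^sub>v m = 0\<^sub>v m" for a using carrier_matD[OF Qc[of a]] by (intro eq_vecI) auto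
  have Rz: "R a *\<^sub>v 0\<^sub>v n = 0\<^sub>v n" for a using carrier_matD[OF Rc[of a]] by (intro eq_vecI) auto
  have Q0v: "Q 0 *\<^sub>v x = x" if "x \<in> carrier_vec m" for x using that by (simp add: Q0)
  have R0v: "R 0 *\<^sub>v x = x" if "x \<in> carrier_vec n" for x using that by (simp add: R0)
  have dot: "dot (u,v) (x,y) = (u + Q (v $ 0) *\<^sub>v x, v + y)" for u v x y
    by (simp add: dot_def Q_def)
  have circ: "circ (u,v) (x,y) = (u + x, v + R (u $ 0) *\<^sub>v y)" for u v x y
    by (simp add: circ_def R_def)
  have memA: "(u,v) \<in> A \<longleftrightarrow> u \<in> carrier_vec m \<and> v \<in> carrier_vec n" for u v
    by (simp add: A_def)

  have Qdim[simp]: "dim_row (Q a) = m" "dim_col (Q a) = m" for a using carrier_matD[OF Qc[of a]] by auto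
  have Rdim[simp]: "dim_row (R a) = n" "dim_col (R a) = n" for a using carrier_matD[OF Rc[of a]] by auto
  have Qv[simp]: "Q a *\<^sub>v x \<in> carrier_vec m" if "x \<in> carrier_vec m" for a x
    using that by (rule mult_mat_vec_carrier[OF Qc])
  have Rv[simp]: "R a *\<^sub>v x \<in> carrier_vec n" if "x \<in> carrier_vec n" for a x
    using that by (rule mult_mat_vec_carrier[OF Rc])
  define e where "e = (0\<^sub>v m :: bool mod_ring vec, 0\<^sub>v n :: 'p mod_ring vec)"
  define dinv where "dinv = (\<lambda>(u::bool mod_ring vec, v::'p mod_ring vec). (- (Q ((- v) $ 0) *\<^sub>v u), - v))"
  define cinv where "cinv = (\<lambda>(u::bool mod_ring vec, v::'p mod_ring vec). (- u, - (R ((- u) $ 0) *\<^sub>v v)))"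
  have eA: "e \<in> A" by (simp add: e_def memA)
  have dot_e: "dot e a = a \<and> dot a e = a" if aA: "a \<in> A" for a
  proof -
    obtain u v where a: "a = (u,v)" "u \<in> carrier_vec m" "v \<in> carrier_vec n" using aA by (auto simp: A_def)
    show ?thesis using a n0 by (simp add: e_def dot Q0v Qz)
  qed
  have circ_e: "circ e a = a \<and> circ a e = a" if aA: "a \<in> A" for a
  proof -
    obtain u v where a: "a = (u,v)" "u \<in> carrier_vec m" "v \<in> carrier_vec n" using aA by (auto simp: A_def)
    show ?thesis using a m0 by (simp add: e_def circ R0v Rz)
  qed
  have G1: "mk_grp A dot = \<lparr>carrier = A, mult = dot, one = e\<rparr>"
    by (rule mk_grp_eq[OF eA dot_e])
  have G2: "mk_grp A circ = \<lparr>carrier = A, mult = circ, one = e\<rparr>"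
    by (rule mk_grp_eq[OF eA circ_e])
  have dot_closed: "dot a b \<in> A" if "a \<in> A" "b \<in> A" for a b
    using that by (cases a; cases b) (auto simp: dot memA)
  have circ_closed: "circ a b \<in> A" if "a \<in> A" "b \<in> A" for a b
    using that by (cases a; cases b) (auto simp: circ memA)
  have dinvA: "dinv a \<in> A" if "a \<in> A" for a
    using that by (cases a) (auto simp: dinv_def memA)
  have cinvA: "cinv a \<in> A" if "a \<in> A" for a
    using that by (cases a) (auto simp: cinv_def memA)
  have dinv_l: "dot (dinv a) a = e" if aA: "a \<in> A" for a
  proof -
    obtain u v where a: "a = (u,v)" "u \<in> carrier_vec m" "v \<in> carrier_vec n" using aA by (auto simp: A_def)
    show ?thesis using a n0 by (simp add: dinv_def dot e_def)
  qed
  have cinv_l: "circ (cinv a) a = e" if aA: "a \<in> A" for a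
  proof -
    obtain u v where a: "a = (u,v)" "u \<in> carrier_vec m" "v \<in> carrier_vec n" using aA by (auto simp: A_def)
    show ?thesis using a m0 by (simp add: cinv_def circ e_def)
  qed
  have dot_assoc: "dot (dot a b) c = dot a (dot b c)" if aA: "a \<in> A" "b \<in> A" "c \<in> A" for a b c
  proof -
    obtain u v where a: "a = (u,v)" "u \<in> carrier_vec m" "v \<in> carrier_vec n" using aA by (auto simp: A_def)
    obtain x y where b: "b = (x,y)" "x \<in> carrier_vec m" "y \<in> carrier_vec n" using aA by (auto simp: A_def)
    obtain z w where c: "c = (z,w)" "z \<in> carrier_vec m" "w \<in> carrier_vec n" using aA by (auto simp: A_def)
    have i: "(v + y) $ 0 = v $ 0 + y $ 0" using b n0 by simp
    have "Q (v $ 0 + y $ 0) *\<^sub>v z = Q (v $ 0) *\<^sub>v (Q (y $ 0) *\<^sub>v z)" using QQ c by simp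
    then show ?thesis using a b c i by (simp add: dot Qdist)
  qed
  have circ_assoc: "circ (circ a b) c = circ a (circ b c)" if aA: "a \<in> A" "b \<in> A" "c \<in> A" for a b c
  proof -
    obtain u v where a: "a = (u,v)" "u \<in> carrier_vec m" "v \<in> carrier_vec n" using aA by (auto simp: A_def)
    obtain x y where b: "b = (x,y)" "x \<in> carrier_vec m" "y \<in> carrier_vec n" using aA by (auto simp: A_def)
    obtain z w where c: "c = (z,w)" "z \<in> carrier_vec m" "w \<in> carrier_vec n" using aA by (auto simp: A_def)
    have i: "(u + x) $ 0 = u $ 0 + x $ 0" using b m0 by simp
    have "R (u $ 0 + x $ 0) *\<^sub>v w = R (u $ 0) *\<^sub>v (R (x $ 0) *\<^sub>v w)" using RR c by simp
    then show ?thesis using a b c i by (simp add: circ Rdist)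
  qed
  have grp1: "group (mk_grp A dot)" unfolding G1
  proof (rule groupI)
    fix x assume "x \<in> carrier \<lparr>carrier = A, mult = dot, one = e\<rparr>"
    then have x: "x \<in> A" by simp
    show "\<exists>y\<in>carrier \<lparr>carrier = A, mult = dot, one = e\<rparr>. y \<otimes>\<^bsub>\<lparr>carrier = A, mult = dot, one = e\<rparr>\<^esub> x = \<one>\<^bsub>\<lparr>carrier = A, mult = dot, one = e\<rparr>\<^esub>"
      using dinvA[OF x] dinv_l[OF x] by auto
  qed (auto simp: dot_closed eA dot_assoc dot_e)
  have grp2: "group (mk_grp A circ)" unfolding G2
  proof (rule groupI)
    fix x assume "x \<in> carrier \<lparr>carrier = A, mult = circ, one = e\<rparr>"
    then have x: "x \<in> A" by simp
    show "\<exists>y\<in>carrier \<lparr>carrier = A, mult = circ, one = e\<rparr>. y \<otimes>\<^bsub>\<lparr>carrier = A, mult = circ, one = e\<rparr>\<^esub> x = \<one>\<^bsub>\<lparr>carrier = A, mult = circ, one = e\<rparr>\<^esub>"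
      using cinvA[OF x] cinv_l[OF x] by auto
  qed (auto simp: circ_closed eA circ_assoc circ_e)
  have invA: "inv\<^bsub>mk_grp A dot\<^esub> a = dinv a" if aA: "a \<in> A" for a
    by (rule group.inv_equality[OF grp1]) (simp_all add: G1 dinv_l dinvA aA)
  have brace: "circ a (dot b c) = dot (dot (circ a b) (inv\<^bsub>mk_grp A dot\<^esub> a)) (circ a c)"
    if aA: "a \<in> A" "b \<in> A" "c \<in> A" for a b c
  proof -
    obtain u v where a: "a = (u,v)" "u \<in> carrier_vec m" "v \<in> carrier_vec n" using aA by (auto simp: A_def)
    obtain x y where b: "b = (x,y)" "x \<in> carrier_vec m" "y \<in> carrier_vec n" using aA by (auto simp: A_def)
    obtain z w where c: "c = (z,w)" "z \<in> carrier_vec m" "w \<in> carrier_vec n" using aA by (auto simp: A_def)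
    have i1: "(v + R (u$0) *\<^sub>v y) $ 0 = v$0 + y$0" using Rfirst a b n0 by simp
    have i0: "(- v) $ 0 = - (v $ 0)" using a n0 by simp
    have s: "v$0 + y$0 + - (v$0) = y$0" by (simp add: algebra_simps)
    have q1: "Q (v$0 + y$0) *\<^sub>v (- (Q (- (v$0)) *\<^sub>v u)) = - (Q (y$0) *\<^sub>v u)"
      using a by (simp add: Qneg QQ s)
    have i2: "(v + R (u$0) *\<^sub>v y + - v) $ 0 = y $ 0" using a b n0 Rfirst s by simp
    have "dot (circ a b) (inv\<^bsub>mk_grp A dot\<^esub> a) = dot (u + x, v + R (u$0) *\<^sub>v y) (- (Q ((- v) $ 0) *\<^sub>v u), - v)"
      using aA by (simp add: invA a b(1) dinv_def circ)
    also have "\<dots> = (u + x + - (Q (y$0) *\<^sub>v u), v + R (u$0) *\<^sub>v y + - v)"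
      by (simp only: dot i1 i0 q1)
    finally have h: "dot (circ a b) (inv\<^bsub>mk_grp A dot\<^esub> a) = (u + x + - (Q (y$0) *\<^sub>v u), v + R (u$0) *\<^sub>v y + - v)" .
    have "dot (dot (circ a b) (inv\<^bsub>mk_grp A dot\<^esub> a)) (circ a c)
       = (u + x + - (Q (y$0) *\<^sub>v u) + Q (y$0) *\<^sub>v (u + z), v + R (u$0) *\<^sub>v y + - v + (v + R (u$0) *\<^sub>v w))"
      unfolding h by (simp only: a c circ dot i2)
    also have "\<dots> = (u + (x + Q (y$0) *\<^sub>v z), v + (R (u$0) *\<^sub>v y + R (u$0) *\<^sub>v w))"
      by (simp only: Qdist[OF a(2) c(2)] vec_id1[OF a(2) b(2) Qv[OF a(2)] Qv[OF c(2)]] vec_id2[OF a(3) Rv[OF b(3)] Rv[OF c(3)]])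
    also have "\<dots> = circ a (dot b c)"
      using a b c by (simp add: dot circ Rdist)
    finally show ?thesis by simp
  qed
  have SB: "skew_brace A dot circ"
    unfolding skew_brace_def using grp1 grp2 brace by blast
  have Edim[simp]: "dim_row E = n" "dim_col E = n" using Ec by auto
  have R1: "R 1 = E" unfolding R_def
  proof -
    have "to_int_mod_ring (1::bool mod_ring) = 1" by transfer simp
    then show "E ^\<^sub>m nat (to_int_mod_ring (1::bool mod_ring)) = E" using Ec by simp
  qed
  have bool01: "(x::bool mod_ring) = 1" if "x \<noteq> 0" for x
    using that by transfer auto
  have notMT: "\<not> meta_trivial A dot circ"
    if "\<exists>w :: 'p mod_ring. \<exists>j<m. (P ^\<^sub>m nat (to_int_mod_ring w) - 1\<^sub>m m) $$ (0, j) \<noteq> 0"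
  proof
    assume MT: "meta_trivial A dot circ"
    from that obtain w j where j: "j < m" and wj: "(Q w - 1\<^sub>m m) $$ (0, j) \<noteq> 0" unfolding Q_def by blast
    obtain i where i: "i < n" and Eii: "E $$ (i,i) = -1"
    proof -
      have "\<exists>i<n. E $$ (i,i) \<noteq> 1"
      proof (rule ccontr)
        assume "\<not> (\<exists>i<n. E $$ (i,i) \<noteq> 1)"
        then have "E = 1\<^sub>m n" using Ec E_diag by (intro eq_matI) auto
        with E_nonid show False by simp
      qed
      then show ?thesis using that E_eps by blast
    qed
    define vw where "vw = vec n (\<lambda>k. if k = 0 then - w else 0)"
    define a1 where "a1 = (0\<^sub>v m :: bool mod_ring vec, vw)"
    define b1 where "b1 = (unit_vec m j :: bool mod_ring vec, 0\<^sub>v n :: 'p mod_ring vec)"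
    define c1 where "c1 = (unit_vec m 0 :: bool mod_ring vec, 0\<^sub>v n :: 'p mod_ring vec)"
    define d1 where "d1 = (0\<^sub>v m :: bool mod_ring vec, unit_vec n i :: 'p mod_ring vec)"
    define X where "X = brace_star A dot circ a1 b1"
    define Y where "Y = brace_star A dot circ c1 d1"
    have XA: "X \<in> brace_commutator A dot circ" unfolding brace_commutator_def X_def
      by (rule generate.incl, rule CollectI, rule exI[of _ a1], rule exI[of _ b1]) (auto simp: a1_def b1_def memA vw_def)
    have YA: "Y \<in> brace_commutator A dot circ" unfolding brace_commutator_def Y_def
      by (rule generate.incl, rule CollectI, rule exI[of _ c1], rule exI[of _ d1]) (auto simp: c1_def d1_def memA)
    have XY: "circ X Y = dot X Y" using MT XA YA unfolding meta_trivial_def by blast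
    have X1: "fst X $ 0 = (Q w - 1\<^sub>m m) $$ (0, j)"
      unfolding X_def brace_star_def
      using m0 n0 j by (simp add: invA memA a1_def b1_def vw_def dinv_def dot circ Q0v R0v Qz Rz)
    have Y2: "snd Y = E *\<^sub>v unit_vec n i - unit_vec n i"
      unfolding Y_def brace_star_def
      using m0 n0 i by (simp add: invA memA c1_def d1_def dinv_def dot circ Q0v R0v Qz Rz R1) (intro eq_vecI, auto)
    have X0: "fst X $ 0 = 1" using X1 wj bool01 by simp
    obtain X1' X2 where Xp: "X = (X1', X2)" by (cases X)
    obtain Y1 Y2' where Yp: "Y = (Y1, Y2')" by (cases Y)
    have "snd (circ X Y) = snd (dot X Y)" using XY by simp
    then have eq: "X2 + E *\<^sub>v Y2' = X2 + Y2'" using X0 Xp Yp by (simp add: circ dot R1)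
    have Y2': "Y2' = E *\<^sub>v unit_vec n i - unit_vec n i" using Y2 Yp by simp
    have dimY: "dim_vec Y2' = n" using Y2' by simp
    have "(X2 + E *\<^sub>v Y2') $ i = (X2 + Y2') $ i" using eq by simp
    then have e1: "(E *\<^sub>v Y2') $ i = Y2' $ i" using dimY i by simp
    have "E *\<^sub>v Y2' = E *\<^sub>v (E *\<^sub>v unit_vec n i) - E *\<^sub>v unit_vec n i"
      unfolding Y2' by (rule mult_minus_distrib_mat_vec[OF Ec mult_mat_vec_carrier[OF Ec unit_vec_carrier] unit_vec_carrier])
    also have "E *\<^sub>v (E *\<^sub>v unit_vec n i) = unit_vec n i"
      using Ec EE by (simp add: assoc_mult_mat_vec[of E n n E n, symmetric])
    finally have "(E *\<^sub>v Y2') $ i = 1 - E $$ (i,i)" using i by simp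
    moreover have "Y2' $ i = E $$ (i,i) - 1" using i Y2' by simp
    ultimately have "(2::'p mod_ring) = - 2" using e1 Eii by simp
    then have "(2::'p mod_ring) + 2 = 0" by (metis add.left_inverse)
    then have "(of_nat 4 :: 'p mod_ring) = 0" by simp
    then have d4: "CARD('p) dvd 4" by (rule of_nat_0_mod_ring_dvd)
    have pr: "prime CARD('p)" by (rule prime_card)
    have "CARD('p) dvd 2 ^ 2" using d4 by simp
    then have "CARD('p) dvd 2" using prime_dvd_power[OF pr] by blast
    then have "CARD('p) \<le> 2" by (rule dvd_imp_le) simp
    moreover have "CARD('p) > 1" using pr prime_gt_1_nat by blast
    ultimately have "CARD('p) = 2" by simp
    then show False using p_odd by simp
  qed
  show ?thesis using SB notMT by blast
qed

end
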